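(* Let $t_1,\dots,t_n$ be basic terms, $\kappa$ a time variable, and $\Delta$ the saturation of the sample set $\{t_1[\kappa],\dots,t_n[\kappa]\}$. Then $\mathbf{W}\not\models 1\le t_1\vee\cdots\vee t_n$ if, and only if, there exists a $\Delta$-diagram $\delta$ such that $\delta(\kappa)>\delta(t_i[\kappa])$ for each $i\in\{1,\dots,n\}$.
   Context: Time warps: join-preserving maps $f\colon\omega^+\to\omega^+$, $\omega^+=\omega\cup\{\omega\}$, ordered pointwise. $\mathbf{W}=\langle W,\wedge,\vee,\circ,{}^\star,\mathrm{id}\rangle$: pointwise meet/join, composition, identity, and $f^\star$ = largest time warp $h$ with $f\circ h\le p$, where $p(m)=\bigvee\{k\in\omega\mid k<m\}$. Terms are built from variables with $\wedge,\vee,\cdot,{}',1$ (interpreted as $\wedge,\vee,\circ,{}^\star,\mathrm{id}$); basic terms use only variables, $\cdot,{}',1$. Samples (formal expressions) are given by the grammar $\alpha::=\kappa\mid t[\alpha]\mid \mathrm{suc}(\alpha)\mid\mathrm{last}(t)$ with $\kappa$ from a countably infinite set of time variables and $t$ a basic term. Let $\leadsto$ be the relation on samples with $t[\alpha]\leadsto\alpha$, $\mathrm{suc}(\alpha)\leadsto\alpha$, $t[\alpha]\leadsto t[\mathrm{last}(t)]$, $(tu)[\alpha]\leadsto t[u[\alpha]]$, $t'[\alpha]\leadsto t[t'[\alpha]]$, $t'[\alpha]\leadsto t[\mathrm{suc}(t'[\alpha])]$. The saturation of a sample set $\Delta_0$ is the set of samples $\beta$ with $\alpha\leadsto^*\beta$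 for some $\alpha\in\Delta_0$ ($\leadsto^*$ reflexive-transitive closure); $\Delta$ is saturated if closed under $\leadsto$. Let $S(n)=n+1$ for $n\in\omega$, $S(\omega)=\omega$. For a saturated $\Delta$, a $\Delta$-diagram is a map $\delta\colon\Delta\to\omega^+$ such that, whenever the samples mentioned belong to $\Delta$: (1) $\delta(\alpha)\le\delta(\beta)\Rightarrow\delta(t[\alpha])\le\delta(t[\beta])$; (2) $\delta(\alpha)=0\Rightarrow\delta(t[\alpha])=0$; (3) $\delta(\mathrm{suc}(\alpha))=S(\delta(\alpha))$; (4) for $t[\alpha]\in\Delta$: $\delta(\mathrm{last}(t))\le\delta(\alpha)\iff\delta(t[\mathrm{last}(t)])=\delta(t[\alpha])$; (5) $\delta(\mathrm{last}(t))=\omega\Rightarrow\delta(t[\mathrm{last}(t)])=\omega$; (6) $\delta(1[\alpha])=\delta(\alpha)$; (7) $\delta(\mathrm{last}(1))=\omega$; (8) $\delta((tu)[\alpha])=\delta(t[u[\alpha]])$; (9) $\delta(\mathrm{last}(tu))=\omega\Rightarrow\delta(\mathrm{last}(t))=\delta(\mathrm{last}(u))=\omega$; (10) for $t'[\alpha]\in\Delta$: $0<\delta(\alpha)<\omega\Rightarrow\delta(t[t'[\alpha]])<\delta(\alpha)$; (11) for $t'[\alpha]\in\Delta$: $\delta(t'[\alpha])<\omega\Rightarrow\delta(\alpha)\le\delta(t[\mathrm{suc}(t'[\alpha])])$; (12) $\delta(\mathrm{last}(t'))=\omega\Rightarrow\delta(\mathrm{last}(t))=\omega$. *)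

theory Defs
  imports Main "HOL-Library.Extended_Nat"
begin

text \<open>omega^+ is modelled by enat, with omega = infinity.
  A time warp is a map preserving all joins (suprema of arbitrary subsets,
  including the empty one).\<close>

definition time_warp :: "(enat \<Rightarrow> enat) \<Rightarrow> bool" where
  "time_warp f \<longleftrightarrow> (\<forall>A::enat set. f (Sup A) = Sup (f ` A))"

definition pred_tw :: "enat \<Rightarrow> enat" where
  "pred_tw m = Sup {enat k | k. enat k < m}"

definition tw_star :: "(enat \<Rightarrow> enat) \<Rightarrow> (enat \<Rightarrow> enat)" where
  "tw_star f = (GREATEST h. time_warp h \<and> f \<circ> h \<le> pred_tw)"

datatype trm = Var nat | Meet trm trm | Join trm trm | Comp trm trm | Star trm | One

fun basic :: "trm \<Rightarrow> bool" where
  "basic (Var v) = True"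
| "basic (Meet s t) = False"
| "basic (Join s t) = False"
| "basic (Comp s t) = (basic s \<and> basic t)"
| "basic (Star t) = basic t"
| "basic One = True"

fun eval :: "(nat \<Rightarrow> enat \<Rightarrow> enat) \<Rightarrow> trm \<Rightarrow> enat \<Rightarrow> enat" where
  "eval \<sigma> (Var v) = \<sigma> v"
| "eval \<sigma> (Meet s t) = (\<lambda>x. inf (eval \<sigma> s x) (eval \<sigma> t x))"
| "eval \<sigma> (Join s t) = (\<lambda>x. sup (eval \<sigma> s x) (eval \<sigma> t x))"
| "eval \<sigma> (Comp s t) = eval \<sigma> s \<circ> eval \<sigma> t"
| "eval \<sigma> (Star t) = tw_star (eval \<sigma> t)"
| "eval \<sigma> One = id"

definition W_models_le :: "trm \<Rightarrow> trm \<Rightarrow> bool" where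
  "W_models_le s u \<longleftrightarrow>
     (\<forall>\<sigma>. (\<forall>v. time_warp (\<sigma> v)) \<longrightarrow> (\<forall>x. eval \<sigma> s x \<le> eval \<sigma> u x))"

fun joins :: "trm list \<Rightarrow> trm" where
  "joins [] = One"  (* never used: the theorem assumes a nonempty list *)
| "joins [t] = t"
| "joins (t # ts) = Join t (joins ts)"

datatype sample = TVar nat | App trm sample | SSuc sample | Last trm

inductive step :: "sample \<Rightarrow> sample \<Rightarrow> bool" where
  "step (App t a) a"
| "step (SSuc a) a"
| "step (App t a) (App t (Last t))"
| "step (App (Comp t u) a) (App t (App u a))"
| "step (App (Star t) a) (App t (App (Star t) a))"
| "step (App (Star t) a) (App t (SSuc (App (Star t) a)))"

definition saturation :: "sample set \<Rightarrow> sample set" where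
  "saturation D0 = {b. \<exists>a\<in>D0. step\<^sup>*\<^sup>* a b}"

definition diagram :: "sample set \<Rightarrow> (sample \<Rightarrow> enat) \<Rightarrow> bool" where
  "diagram D \<delta> \<longleftrightarrow>
    (\<forall>t a b. a \<in> D \<and> b \<in> D \<and> App t a \<in> D \<and> App t b \<in> D \<longrightarrow>
        \<delta> a \<le> \<delta> b \<longrightarrow> \<delta> (App t a) \<le> \<delta> (App t b)) \<and>
    (\<forall>t a. a \<in> D \<and> App t a \<in> D \<longrightarrow> \<delta> a = 0 \<longrightarrow> \<delta> (App t a) = 0) \<and>
    (\<forall>a. a \<in> D \<and> SSuc a \<in> D \<longrightarrow> \<delta> (SSuc a) = eSuc (\<delta> a)) \<and>
    (\<forall>t a. App t a \<in> D \<and> a \<in> D \<and> Last t \<in> D \<and> App t (Last t) \<in> D \<longrightarrow>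
        (\<delta> (Last t) \<le> \<delta> a \<longleftrightarrow> \<delta> (App t (Last t)) = \<delta> (App t a))) \<and>
    (\<forall>t. Last t \<in> D \<and> App t (Last t) \<in> D \<longrightarrow>
        \<delta> (Last t) = \<infinity> \<longrightarrow> \<delta> (App t (Last t)) = \<infinity>) \<and>
    (\<forall>a. App One a \<in> D \<and> a \<in> D \<longrightarrow> \<delta> (App One a) = \<delta> a) \<and>
    (Last One \<in> D \<longrightarrow> \<delta> (Last One) = \<infinity>) \<and>
    (\<forall>t u a. App (Comp t u) a \<in> D \<and> App t (App u a) \<in> D \<longrightarrow>
        \<delta> (App (Comp t u) a) = \<delta> (App t (App u a))) \<and>
    (\<forall>t u. Last (Comp t u) \<in> D \<and> Last t \<in> D \<and> Last u \<in> D \<longrightarrow>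
        \<delta> (Last (Comp t u)) = \<infinity> \<longrightarrow> \<delta> (Last t) = \<infinity> \<and> \<delta> (Last u) = \<infinity>) \<and>
    (\<forall>t a. App (Star t) a \<in> D \<and> a \<in> D \<and> App t (App (Star t) a) \<in> D \<longrightarrow>
        0 < \<delta> a \<and> \<delta> a < \<infinity> \<longrightarrow> \<delta> (App t (App (Star t) a)) < \<delta> a) \<and>
    (\<forall>t a. App (Star t) a \<in> D \<and> a \<in> D \<and> App t (SSuc (App (Star t) a)) \<in> D \<longrightarrow>
        \<delta> (App (Star t) a) < \<infinity> \<longrightarrow> \<delta> a \<le> \<delta> (App t (SSuc (App (Star t) a)))) \<and>
    (\<forall>t. Last (Star t) \<in> D \<and> Last t \<in> D \<longrightarrow>
        \<delta> (Last (Star t)) = \<infinity> \<longrightarrow> \<delta> (Last t) = \<infinity>)"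

end

theory Submission
  imports Defs
begin

lemma enat_Sup_in: "(Sup A :: enat) \<noteq> \<infinity> \<Longrightarrow> A \<noteq> {} \<Longrightarrow> Sup A \<in> A"
  unfolding Sup_enat_def by (auto split: if_splits)

lemma Sup_range_enat: "Sup (range enat) = \<infinity>"
proof -
  have "infinite (range enat)" by (metis finite_imageD inj_on_def enat.inject infinite_UNIV_nat)
  then show ?thesis unfolding Sup_enat_def by auto
qed

lemma tw_zero: "time_warp f \<Longrightarrow> f 0 = 0"
  unfolding time_warp_def by (metis Sup_empty bot_enat_def image_empty)

lemma tw_mono: "time_warp f \<Longrightarrow> mono f"
proof (rule monoI)
  fix x y :: enat assume tw: "time_warp f" and xy: "x \<le> y"
  have "f (Sup {x,y}) = Sup (f ` {x,y})" using tw unfolding time_warp_def by blast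
  moreover have "Sup {x,y} = y" using xy by (simp add: sup_absorb2)
  ultimately show "f x \<le> f y" by (metis Sup_insert ccSUP_empty image_empty image_insert sup.cobounded1 sup_bot.right_neutral)
qed

lemma tw_inf: "time_warp f \<Longrightarrow> f \<infinity> = (SUP n. f (enat n))"
  unfolding time_warp_def by (metis Sup_range_enat image_image)

lemma tw_intro:
  assumes z: "f 0 = 0" and m: "mono f" and i: "f \<infinity> = (SUP n. f (enat n))"
  shows "time_warp f"
  unfolding time_warp_def
proof
  fix A :: "enat set"
  show "f (Sup A) = Sup (f ` A)"
  proof (cases "A = {}")
    case True then show ?thesis using z by (simp add: bot_enat_def)
  next
    case ne: False
    show ?thesis
    proof (cases "Sup A = \<infinity>")
      case False
      then have "Sup A \<in> A" using enat_Sup_in ne by blast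
      then show ?thesis using m by (metis Sup_upper antisym imageI mono_Sup)
    next
      case True
      have "f \<infinity> \<le> Sup (f ` A)" unfolding i
      proof (rule SUP_least)
        fix n
        have "enat n < Sup A" using True by simp
        then obtain a where "a \<in> A" "enat n < a" using less_Sup_iff by blast
        then show "f (enat n) \<le> Sup (f ` A)" using m by (meson SUP_upper2 less_imp_le monoD)
      qed
      moreover have "Sup (f ` A) \<le> f \<infinity>" using m by (simp add: SUP_least monoD)
      ultimately show ?thesis using True by simp
    qed
  qed
qed

definition sstar :: "(enat \<Rightarrow> enat) \<Rightarrow> enat \<Rightarrow> enat" where
  "sstar f x = Sup {k. f k < x}"

lemma sstar_mono: "mono (sstar f)"
  unfolding sstar_def by (rule monoI) (auto intro!: Sup_subset_mono)

lemma sstar_tw: "time_warp (sstar f)"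
  unfolding time_warp_def
proof
  fix A :: "enat set"
  have "sstar f (Sup A) \<le> Sup (sstar f ` A)"
    unfolding sstar_def[of f "Sup A"]
  proof (rule Sup_least)
    fix k assume "k \<in> {k. f k < Sup A}"
    then obtain a where "a \<in> A" "f k < a" using less_Sup_iff by auto
    then have "k \<le> sstar f a" unfolding sstar_def by (auto intro: Sup_upper)
    then show "k \<le> Sup (sstar f ` A)" using \<open>a \<in> A\<close> by (meson SUP_upper2)
  qed
  moreover have "Sup (sstar f ` A) \<le> sstar f (Sup A)"
    using sstar_mono by (simp add: SUP_least Sup_upper monoD)
  ultimately show "sstar f (Sup A) = Sup (sstar f ` A)" by simp
qed

lemma less_pred_tw: "y < x \<Longrightarrow> y \<le> pred_tw x"
  unfolding pred_tw_def
  by (cases y) (auto intro: Sup_upper)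

lemma pred_tw_less: "0 < n \<Longrightarrow> pred_tw (enat n) < enat n"
proof -
  assume "0 < n"
  have "pred_tw (enat n) \<le> enat (n - 1)" unfolding pred_tw_def
    by (rule Sup_least) auto
  then show ?thesis using \<open>0 < n\<close> by (meson diff_less enat_ord_simps(2) le_less_trans zero_less_one)
qed

lemma pred_tw_inf: "pred_tw \<infinity> = \<infinity>"
  unfolding pred_tw_def
proof -
  have "{enat k |k. enat k < \<infinity>} = range enat" by auto
  then show "Sup {enat k |k. enat k < \<infinity>} = \<infinity>" using Sup_range_enat by simp
qed

lemma sstar_below: "time_warp f \<Longrightarrow> f (sstar f x) \<le> pred_tw x"
proof -
  assume tw: "time_warp f"
  have "f (sstar f x) = Sup (f ` {k. f k < x})" using tw unfolding time_warp_def sstar_def by blast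
  also have "\<dots> \<le> pred_tw x" by (rule SUP_least) (auto intro: less_pred_tw)
  finally show ?thesis .
qed

lemma sstar_greatest:
  assumes tw: "time_warp f" and h: "time_warp h" and le: "f \<circ> h \<le> pred_tw"
  shows "h \<le> sstar f"
proof (rule le_funI)
  fix x
  have fin: "h (enat n) \<le> sstar f (enat n)" for n
  proof (cases "n = 0")
    case True then show ?thesis using tw_zero[OF h] by (simp add: zero_enat_def[symmetric])
  next
    case False
    have "f (h (enat n)) \<le> pred_tw (enat n)" using le by (simp add: le_fun_def)
    also have "\<dots> < enat n" using False pred_tw_less by simp
    finally show ?thesis unfolding sstar_def by (auto intro: Sup_upper)
  qed
  show "h x \<le> sstar f x"
  proof (cases x)
    case (enat n) then show ?thesis using fin by simp
  next
    case infinity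
    have "h \<infinity> = (SUP n. h (enat n))" using tw_inf[OF h] .
    also have "\<dots> \<le> (SUP n. sstar f (enat n))" using fin by (rule SUP_mono') 
    also have "\<dots> = sstar f \<infinity>" using tw_inf[OF sstar_tw] by simp
    finally show ?thesis using infinity by simp
  qed
qed

lemma tw_star_eq: "time_warp f \<Longrightarrow> tw_star f = sstar f"
  unfolding tw_star_def
proof (rule Greatest_equality)
  assume "time_warp f"
  then show "time_warp (sstar f) \<and> f \<circ> sstar f \<le> pred_tw"
    using sstar_tw sstar_below by (auto simp: le_fun_def)
  show "\<And>y. time_warp y \<and> f \<circ> y \<le> pred_tw \<Longrightarrow> y \<le> sstar f"
    using sstar_greatest \<open>time_warp f\<close> by blast
qed

fun db :: "trm \<Rightarrow> trm" where
  "db (Var v) = Var v"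
| "db (Meet s t) = db s"
| "db (Join s t) = db s"
| "db (Comp s t) = Comp (db s) (db t)"
| "db (Star t) = Star (db t)"
| "db One = One"

lemma basic_db: "basic (db t)"
  by (induction t) auto

lemma db_basic: "basic t \<Longrightarrow> db t = t"
  by (induction t) auto

lemma tw_comp: "time_warp f \<Longrightarrow> time_warp g \<Longrightarrow> time_warp (f \<circ> g)"
  unfolding time_warp_def by (simp add: image_comp)

lemma tw_id: "time_warp id"
  unfolding time_warp_def by simp

lemma tw_eval: "(\<forall>v. time_warp (\<sigma> v)) \<Longrightarrow> basic t \<Longrightarrow> time_warp (eval \<sigma> t)"
  by (induction t) (auto simp: tw_comp tw_id tw_star_eq sstar_tw)

lemma eval_star: "(\<forall>v. time_warp (\<sigma> v)) \<Longrightarrow> basic t \<Longrightarrow> eval \<sigma> (Star t) = sstar (eval \<sigma> t)"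
  by (simp add: tw_eval tw_star_eq)

definition lastv :: "(enat \<Rightarrow> enat) \<Rightarrow> enat" where
  "lastv f = (LEAST m. f m = f \<infinity>)"

lemma lastv_at: "f (lastv f) = f \<infinity>"
  unfolding lastv_def by (rule LeastI[of _ \<infinity>]) simp

lemma lastv_iff: "mono f \<Longrightarrow> (lastv f \<le> m \<longleftrightarrow> f m = f \<infinity>)"
proof
  assume "mono f" "lastv f \<le> m"
  then have "f (lastv f) \<le> f m" "f m \<le> f \<infinity>" by (auto simp: monoD)
  then show "f m = f \<infinity>" using lastv_at[of f] by simp
next
  assume "f m = f \<infinity>" then show "lastv f \<le> m" unfolding lastv_def by (rule Least_le)
qed

lemma tw_attained: "time_warp f \<Longrightarrow> f \<infinity> \<noteq> \<infinity> \<Longrightarrow> \<exists>n. f (enat n) = f \<infinity>"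
proof -
  assume tw: "time_warp f" "f \<infinity> \<noteq> \<infinity>"
  then have "Sup (range (\<lambda>n. f (enat n))) \<noteq> \<infinity>" using tw_inf by metis
  then have "Sup (range (\<lambda>n. f (enat n))) \<in> range (\<lambda>n. f (enat n))" using enat_Sup_in by blast
  then show ?thesis using tw_inf[OF tw(1)] by auto
qed

lemma lastv_inf: "time_warp f \<Longrightarrow> lastv f = \<infinity> \<Longrightarrow> f \<infinity> = \<infinity>"
proof (rule ccontr)
  assume tw: "time_warp f" and l: "lastv f = \<infinity>" and "f \<infinity> \<noteq> \<infinity>"
  then obtain n where "f (enat n) = f \<infinity>" using tw_attained by blast
  then have "lastv f \<le> enat n" unfolding lastv_def by (rule Least_le)
  then show False using l by simp
qed

lemma lastv_id: "lastv id = \<infinity>"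
proof -
  have "lastv id \<le> \<infinity>" by simp
  have "id (lastv id) = id \<infinity>" by (rule lastv_at)
  then show ?thesis by simp
qed

lemma lastv_comp:
  assumes f: "time_warp f" and g: "time_warp g" and l: "lastv (f \<circ> g) = \<infinity>"
  shows "lastv f = \<infinity> \<and> lastv g = \<infinity>"
proof (rule ccontr)
  have mfg: "mono (f \<circ> g)" using tw_mono[OF tw_comp[OF f g]] .
  have key: "m = \<infinity>" if "f (g m) = f (g \<infinity>)" for m
  proof -
    have "(f \<circ> g) m = (f \<circ> g) \<infinity>" using that by simp
    then have "lastv (f \<circ> g) \<le> m" unfolding lastv_def by (rule Least_le)
    then show ?thesis using l by simp
  qed
  assume nt: "\<not> (lastv f = \<infinity> \<and> lastv g = \<infinity>)"
  show False
  proof (cases "lastv g = \<infinity>")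
    case False
    have "g (lastv g) = g \<infinity>" by (rule lastv_at)
    then have "f (g (lastv g)) = f (g \<infinity>)" by simp
    then have "lastv g = \<infinity>" by (rule key)
    then show False using False by blast
  next
    case True
    then have lf: "lastv f \<noteq> \<infinity>" using nt by simp
    show False
    proof (cases "g \<infinity> = \<infinity>")
      case False
      then obtain n where "g (enat n) = g \<infinity>" using tw_attained[OF g] by blast
      then have "f (g (enat n)) = f (g \<infinity>)" by simp
      then have "enat n = \<infinity>" by (rule key)
      then show False by simp
    next
      case True
      have "lastv f < \<infinity>" using lf by (cases "lastv f") simp_all
      moreover have "(SUP n. g (enat n)) = \<infinity>" by (subst tw_inf[OF g, symmetric]) (rule True)
      ultimately have "lastv f < (SUP n. g (enat n))" by simp
      then obtain n where "lastv f < g (enat n)" by (auto simp: less_SUP_iff)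
      then have "lastv f \<le> g (enat n)" by simp
      then have "f (g (enat n)) = f \<infinity>" using lastv_iff[OF tw_mono[OF f]] by simp
      then have "f (g (enat n)) = f (g \<infinity>)" using True by simp
      then have "enat n = \<infinity>" by (rule key)
      then show False by simp
    qed
  qed
qed

lemma finite_less_enat: "finite {k::enat. k < enat L}"
  by (rule finite_enat_bounded[of _ L]) auto

lemma lastv_sstar:
  assumes f: "time_warp f" and l: "lastv (sstar f) = \<infinity>"
  shows "lastv f = \<infinity>"
proof (rule ccontr)
  assume "lastv f \<noteq> \<infinity>"
  then obtain L where L: "lastv f = enat L" by auto
  have ms: "mono (sstar f)" by (rule sstar_mono)
  obtain c where c: "sstar f (enat c) = sstar f \<infinity>"
  proof (cases "f \<infinity> = \<infinity>")
    case False
    then obtain c where c: "f \<infinity> = enat c" by auto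
    have "\<infinity> \<in> {k. f k < enat (Suc c)}" using c by simp
    then have "\<infinity> \<le> sstar f (enat (Suc c))" unfolding sstar_def by (rule Sup_upper)
    then have "sstar f (enat (Suc c)) = \<infinity>" by simp
    moreover have "sstar f \<infinity> = \<infinity>" using ms \<open>\<infinity> \<le> _\<close> by (metis enat_ord_code(3) monoD top.extremum_unique)
    ultimately show ?thesis using that by metis
  next
    case True
    let ?S = "{k. f k < \<infinity>}"
    have sub: "?S \<subseteq> {k. k < enat L}"
    proof
      fix k assume "k \<in> ?S"
      show "k \<in> {k. k < enat L}"
      proof (rule ccontr)
        assume "k \<notin> {k. k < enat L}"
        then have "lastv f \<le> k" using L by auto
        then have "f k = \<infinity>" using lastv_iff[OF tw_mono[OF f]] True by simp
        then show False using \<open>k \<in> ?S\<close> by simp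
      qed
    qed
    then have fin: "finite ?S" using finite_less_enat finite_subset by blast
    have "f 0 = enat 0" using tw_zero[OF f] by (metis zero_enat_def)
    then have "0 \<in> ?S" by simp
    then have ne: "?S \<noteq> {}" by blast
    have "Sup ?S = Max ?S" using fin ne unfolding Sup_enat_def by (simp only: if_False if_True)
    then have "Sup ?S \<in> ?S" using fin ne Max_in by metis
    then obtain c where fc: "f (Sup ?S) = enat c" by auto
    have "Sup ?S \<le> sstar f (enat (Suc c))" unfolding sstar_def using fc by (auto intro: Sup_upper)
    moreover have "sstar f (enat (Suc c)) \<le> sstar f \<infinity>" using ms by (simp add: monoD)
    ultimately have "sstar f (enat (Suc c)) = sstar f \<infinity>" unfolding sstar_def by simp
    then show ?thesis using that by blast
  qed
  then have "lastv (sstar f) \<le> enat c" using lastv_iff[OF ms] by simp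
  then show False using l by simp
qed

lemma sstar_10: "time_warp f \<Longrightarrow> 0 < a \<Longrightarrow> a < \<infinity> \<Longrightarrow> f (sstar f a) < a"
proof -
  assume "time_warp f" "0 < a" "a < \<infinity>"
  then obtain n where n: "a = enat n" "0 < n" by (metis enat_0_iff(1) gr_zeroI less_infinityE not_less_zero)
  have "f (sstar f a) \<le> pred_tw a" using sstar_below \<open>time_warp f\<close> by blast
  also have "\<dots> < a" using n pred_tw_less by simp
  finally show ?thesis .
qed

lemma sstar_11: "sstar f a < \<infinity> \<Longrightarrow> a \<le> f (eSuc (sstar f a))"
proof (rule ccontr)
  assume "sstar f a < \<infinity>" "\<not> a \<le> f (eSuc (sstar f a))"
  then obtain j where j: "sstar f a = enat j" by auto
  then have "f (enat (Suc j)) < a" using \<open>\<not> _\<close> by (simp add: eSuc_enat)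
  then have "enat (Suc j) \<le> sstar f a" unfolding sstar_def by (auto intro: Sup_upper)
  then show False using j by simp
qed

fun dl :: "(nat \<Rightarrow> enat \<Rightarrow> enat) \<Rightarrow> enat \<Rightarrow> sample \<Rightarrow> enat" where
  "dl \<sigma> x (TVar k) = x"
| "dl \<sigma> x (App t a) = eval \<sigma> (db t) (dl \<sigma> x a)"
| "dl \<sigma> x (SSuc a) = eSuc (dl \<sigma> x a)"
| "dl \<sigma> x (Last t) = lastv (eval \<sigma> (db t))"

lemma diag_easy:
  assumes tw: "\<forall>v. time_warp (\<sigma> v)"
  shows "diagram D (dl \<sigma> x)"
proof -
  have TW: "time_warp (eval \<sigma> (db t))" for t using tw_eval[OF tw basic_db] .
  have M: "mono (eval \<sigma> (db t))" for t using tw_mono[OF TW] .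
  have ST: "eval \<sigma> (db (Star t)) = sstar (eval \<sigma> (db t))" for t
    using eval_star[OF tw basic_db] by simp
  show ?thesis unfolding diagram_def
  proof (intro conjI allI impI)
    fix t a b assume "dl \<sigma> x a \<le> dl \<sigma> x b"
    then show "dl \<sigma> x (App t a) \<le> dl \<sigma> x (App t b)" using M by (simp add: monoD)
  next
    fix t a assume "dl \<sigma> x a = 0"
    then show "dl \<sigma> x (App t a) = 0" using tw_zero[OF TW] by simp
  next
    fix a show "dl \<sigma> x (SSuc a) = eSuc (dl \<sigma> x a)" by simp
  next
    fix t a
    show "(dl \<sigma> x (Last t) \<le> dl \<sigma> x a) = (dl \<sigma> x (App t (Last t)) = dl \<sigma> x (App t a))"
    proof -
      let ?f = "eval \<sigma> (db t)"
      have "dl \<sigma> x (App t (Last t)) = ?f \<infinity>" using lastv_at[of ?f] by simp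
      moreover have "(lastv ?f \<le> dl \<sigma> x a) = (?f (dl \<sigma> x a) = ?f \<infinity>)" by (rule lastv_iff[OF M])
      ultimately show ?thesis by (simp only: dl.simps eq_commute)
    qed
  next
    fix t assume "dl \<sigma> x (Last t) = \<infinity>"
    then show "dl \<sigma> x (App t (Last t)) = \<infinity>"
      using lastv_inf[OF TW[of t]] lastv_at[of "eval \<sigma> (db t)"] by simp
  next
    fix a show "dl \<sigma> x (App One a) = dl \<sigma> x a" by simp
  next
    show "dl \<sigma> x (Last One) = \<infinity>" using lastv_id by simp
  next
    fix t u a show "dl \<sigma> x (App (Comp t u) a) = dl \<sigma> x (App t (App u a))" by simp
  next
    fix t u assume "dl \<sigma> x (Last (Comp t u)) = \<infinity>"
    then have "lastv (eval \<sigma> (db t) \<circ> eval \<sigma> (db u)) = \<infinity>" by simp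
    then have "lastv (eval \<sigma> (db t)) = \<infinity> \<and> lastv (eval \<sigma> (db u)) = \<infinity>"
      using lastv_comp[OF TW TW] by blast
    then show "dl \<sigma> x (Last t) = \<infinity>" "dl \<sigma> x (Last u) = \<infinity>" by simp_all
  next
    fix t a assume "0 < dl \<sigma> x a \<and> dl \<sigma> x a < \<infinity>"
    then show "dl \<sigma> x (App t (App (Star t) a)) < dl \<sigma> x a"
      using sstar_10[OF TW[of t]] ST[of t] by (simp del: db.simps)
  next
    fix t a assume "dl \<sigma> x (App (Star t) a) < \<infinity>"
    then show "dl \<sigma> x a \<le> dl \<sigma> x (App t (SSuc (App (Star t) a)))"
      using sstar_11 ST[of t] by (simp del: db.simps)
  next
    fix t assume "dl \<sigma> x (Last (Star t)) = \<infinity>"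
    then show "dl \<sigma> x (Last t) = \<infinity>"
      using lastv_sstar[OF TW[of t]] ST[of t] by (simp del: db.simps)
  qed
qed

lemma joins_upper: "t \<in> set ts \<Longrightarrow> eval \<sigma> t x \<le> eval \<sigma> (joins ts) x"
  by (induction ts rule: joins.induct) (auto simp: le_supI1 le_supI2)

lemma joins_less: "ts \<noteq> [] \<Longrightarrow> \<forall>t\<in>set ts. eval \<sigma> t x < y \<Longrightarrow> eval \<sigma> (joins ts) x < y"
  by (induction ts rule: joins.induct) (auto simp: sup_max)

lemma easy_dir:
  assumes b: "\<forall>t\<in>set ts. basic t" and nv: "\<not> W_models_le One (joins ts)"
  shows "\<exists>\<delta>. diagram D \<delta> \<and> (\<forall>t\<in>set ts. \<delta> (TVar \<kappa>) > \<delta> (App t (TVar \<kappa>)))"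
proof -
  obtain \<sigma> x where tw: "\<forall>v. time_warp (\<sigma> v)" and nx: "\<not> x \<le> eval \<sigma> (joins ts) x"
    using nv unfolding W_models_le_def by auto
  have "dl \<sigma> x (TVar \<kappa>) > dl \<sigma> x (App t (TVar \<kappa>))" if "t \<in> set ts" for t
  proof -
    have "eval \<sigma> t x \<le> eval \<sigma> (joins ts) x" using joins_upper that .
    then have "eval \<sigma> t x < x" using nx by simp
    then show ?thesis using db_basic b that by simp
  qed
  then show ?thesis using diag_easy[OF tw] by blast
qed

fun subs :: "trm \<Rightarrow> trm set" where
  "subs (Var v) = {Var v}"
| "subs (Meet s t) = insert (Meet s t) (subs s \<union> subs t)"
| "subs (Join s t) = insert (Join s t) (subs s \<union> subs t)"
| "subs (Comp s t) = insert (Comp s t) (subs s \<union> subs t)"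
| "subs (Star t) = insert (Star t) (subs t)"
| "subs One = {One}"

lemma finite_subs: "finite (subs t)"
  by (induction t) auto

lemma subs_self: "t \<in> subs t"
  by (cases t) auto

lemma subs_sub: "subs t \<subseteq> H \<Longrightarrow> t \<in> H"
  using subs_self by blast

fun heads :: "sample \<Rightarrow> trm set" where
  "heads (TVar k) = {}"
| "heads (App t a) = subs t \<union> heads a"
| "heads (SSuc a) = heads a"
| "heads (Last t) = subs t"

fun tvs :: "sample \<Rightarrow> nat set" where
  "tvs (TVar k) = {k}"
| "tvs (App t a) = tvs a"
| "tvs (SSuc a) = tvs a"
| "tvs (Last t) = {}"

fun dep :: "sample \<Rightarrow> nat" where
  "dep (TVar k) = 0"
| "dep (App t a) = Suc (dep a)"
| "dep (SSuc a) = Suc (dep a)"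
| "dep (Last t) = 0"

fun gw :: "trm \<Rightarrow> nat" where
  "gw (Comp s t) = gw s + gw t"
| "gw (Star t) = gw t + 2"
| "gw _ = 1"

lemma gw_pos: "1 \<le> gw t"
  by (induction t) auto

fun bnd :: "sample \<Rightarrow> nat" where
  "bnd (TVar k) = 0"
| "bnd (App t a) = max (gw t + dep a) (bnd a)"
| "bnd (SSuc a) = max (Suc (dep a)) (bnd a)"
| "bnd (Last t) = 0"

lemma dep_bnd: "dep a \<le> bnd a"
  using gw_pos by (induction a) (auto simp: le_max_iff_disj)

lemma step_inv: "step a b \<Longrightarrow> heads b \<subseteq> heads a \<and> tvs b \<subseteq> tvs a \<and> bnd b \<le> bnd a"
proof (induction rule: step.induct)
  case (1 t a) then show ?case by auto
next
  case (2 a) then show ?case by auto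
next
  case (3 t a) then show ?case using subs_self[of t] by auto
next
  case (4 t u a) then show ?case using gw_pos[of t] gw_pos[of u] by auto
next
  case (5 t a) then show ?case by auto
next
  case (6 t a) then show ?case by auto
qed

lemma steps_inv: "step\<^sup>*\<^sup>* a b \<Longrightarrow> heads b \<subseteq> heads a \<and> tvs b \<subseteq> tvs a \<and> bnd b \<le> bnd a"
proof (induction rule: rtranclp_induct)
  case base then show ?case by simp
next
  case (step y z)
  then show ?case using step_inv[OF step(2)] by auto
qed

definition SB :: "trm set \<Rightarrow> nat set \<Rightarrow> nat \<Rightarrow> sample set" where
  "SB H V n = {b. heads b \<subseteq> H \<and> tvs b \<subseteq> V \<and> dep b \<le> n}"

lemma finite_SB: "finite H \<Longrightarrow> finite V \<Longrightarrow> finite (SB H V n)"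
proof (induction n)
  case 0
  have "SB H V 0 \<subseteq> TVar ` V \<union> Last ` H"
  proof
    fix b assume "b \<in> SB H V 0"
    then show "b \<in> TVar ` V \<union> Last ` H" unfolding SB_def
      by (cases b) (auto dest: subs_sub)
  qed
  then show ?case using 0 finite_subset by blast
next
  case (Suc n)
  have "SB H V (Suc n) \<subseteq> TVar ` V \<union> Last ` H \<union> (\<lambda>(t,a). App t a) ` (H \<times> SB H V n) \<union> SSuc ` SB H V n"
  proof
    fix b assume "b \<in> SB H V (Suc n)"
    then show "b \<in> TVar ` V \<union> Last ` H \<union> (\<lambda>(t,a). App t a) ` (H \<times> SB H V n) \<union> SSuc ` SB H V n"
      unfolding SB_def
      by (cases b) (auto dest: subs_sub)
  qed
  then show ?case using Suc finite_subset by blast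
qed

lemma finite_heads: "finite (heads a)"
  by (induction a) (auto simp: finite_subs)

lemma finite_tvs: "finite (tvs a)"
  by (induction a) auto

lemma finite_saturation: "finite D0 \<Longrightarrow> finite (saturation D0)"
proof -
  assume fin: "finite D0"
  let ?H = "\<Union>a\<in>D0. heads a" and ?V = "\<Union>a\<in>D0. tvs a" and ?N = "Max (insert 0 (bnd ` D0))"
  have "saturation D0 \<subseteq> SB ?H ?V ?N"
  proof
    fix b assume "b \<in> saturation D0"
    then obtain a where a: "a \<in> D0" "step\<^sup>*\<^sup>* a b" unfolding saturation_def by blast
    have i: "heads b \<subseteq> heads a \<and> tvs b \<subseteq> tvs a \<and> bnd b \<le> bnd a" using steps_inv[OF a(2)] .
    have "bnd a \<le> ?N" using fin a(1) by simp
    then have "dep b \<le> ?N" using i dep_bnd[of b] by linarith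
    then show "b \<in> SB ?H ?V ?N" unfolding SB_def using i a(1) by blast
  qed
  moreover have "finite (SB ?H ?V ?N)" using fin finite_heads finite_tvs by (intro finite_SB) auto
  ultimately show ?thesis using finite_subset by blast
qed

lemma sat_step: "a \<in> saturation D0 \<Longrightarrow> step a b \<Longrightarrow> b \<in> saturation D0"
  unfolding saturation_def by (auto intro: rtranclp.rtrancl_into_rtrancl)

lemma sat_base: "a \<in> D0 \<Longrightarrow> a \<in> saturation D0"
  unfolding saturation_def by auto

lemma enat_le_by_fin: "(\<And>c. enat c \<le> q \<Longrightarrow> enat c \<le> y) \<Longrightarrow> q \<le> (y::enat)"
proof (cases q)
  case (enat c) then show "(\<And>c. enat c \<le> q \<Longrightarrow> enat c \<le> y) \<Longrightarrow> q \<le> y" by simp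
next
  case infinity
  assume h: "\<And>c. enat c \<le> q \<Longrightarrow> enat c \<le> y"
  show "q \<le> y"
  proof (cases y)
    case (enat d)
    have "enat (Suc d) \<le> y" using h infinity by simp
    then show ?thesis using enat by simp
  next
    case infinity then show ?thesis by simp
  qed
qed

lemma Sup_fin_enat: "finite A \<Longrightarrow> \<infinity> \<notin> A \<Longrightarrow> Sup A \<noteq> (\<infinity>::enat)"
proof -
  assume f: "finite A" and n: "\<infinity> \<notin> A"
  show ?thesis
  proof (cases "A = {}")
    case True then show ?thesis by (simp add: Sup_enat_def)
  next
    case False
    then have "Sup A = Max A" using f by (simp add: Sup_enat_def)
    moreover have "Max A \<in> A" using f False by (rule Max_in)
    ultimately show ?thesis using n by metis
  qed
qed

locale hard =
  fixes D :: "sample set" and \<delta> :: "sample \<Rightarrow> enat"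
  assumes finD: "finite D" and diag: "diagram D \<delta>"
    and sat: "\<And>a b. a \<in> D \<Longrightarrow> step a b \<Longrightarrow> b \<in> D"
begin

lemma c1: "a \<in> D \<Longrightarrow> b \<in> D \<Longrightarrow> App t a \<in> D \<Longrightarrow> App t b \<in> D \<Longrightarrow> \<delta> a \<le> \<delta> b \<Longrightarrow> \<delta> (App t a) \<le> \<delta> (App t b)"
  using diag[unfolded diagram_def, THEN conjunct1] by blast
lemma c2: "a \<in> D \<Longrightarrow> App t a \<in> D \<Longrightarrow> \<delta> a = 0 \<Longrightarrow> \<delta> (App t a) = 0"
  using diag[unfolded diagram_def, THEN conjunct2, THEN conjunct1] by blast
lemma c3: "a \<in> D \<Longrightarrow> SSuc a \<in> D \<Longrightarrow> \<delta> (SSuc a) = eSuc (\<delta> a)"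
  using diag[unfolded diagram_def, THEN conjunct2, THEN conjunct2, THEN conjunct1] by blast
lemma c4: "App t a \<in> D \<Longrightarrow> a \<in> D \<Longrightarrow> Last t \<in> D \<Longrightarrow> App t (Last t) \<in> D \<Longrightarrow>
        (\<delta> (Last t) \<le> \<delta> a \<longleftrightarrow> \<delta> (App t (Last t)) = \<delta> (App t a))"
  using diag[unfolded diagram_def, THEN conjunct2, THEN conjunct2, THEN conjunct2, THEN conjunct1] by simp
lemma c5: "Last t \<in> D \<Longrightarrow> App t (Last t) \<in> D \<Longrightarrow> \<delta> (Last t) = \<infinity> \<Longrightarrow> \<delta> (App t (Last t)) = \<infinity>"
  using diag[unfolded diagram_def, THEN conjunct2, THEN conjunct2, THEN conjunct2, THEN conjunct2, THEN conjunct1] by blast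
lemma c6: "App One a \<in> D \<Longrightarrow> a \<in> D \<Longrightarrow> \<delta> (App One a) = \<delta> a"
  using diag[unfolded diagram_def, THEN conjunct2, THEN conjunct2, THEN conjunct2, THEN conjunct2, THEN conjunct2, THEN conjunct1] by blast
lemma c8: "App (Comp t u) a \<in> D \<Longrightarrow> App t (App u a) \<in> D \<Longrightarrow> \<delta> (App (Comp t u) a) = \<delta> (App t (App u a))"
  using diag[unfolded diagram_def, THEN conjunct2, THEN conjunct2, THEN conjunct2, THEN conjunct2, THEN conjunct2, THEN conjunct2, THEN conjunct2, THEN conjunct1] by blast
lemma c9: "Last (Comp t u) \<in> D \<Longrightarrow> Last t \<in> D \<Longrightarrow> Last u \<in> D \<Longrightarrow> \<delta> (Last (Comp t u)) = \<infinity> \<Longrightarrow> \<delta> (Last t) = \<infinity> \<and> \<delta> (Last u) = \<infinity>"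
  using diag[unfolded diagram_def, THEN conjunct2, THEN conjunct2, THEN conjunct2, THEN conjunct2, THEN conjunct2, THEN conjunct2, THEN conjunct2, THEN conjunct2, THEN conjunct1] by blast
lemma c10: "App (Star t) a \<in> D \<Longrightarrow> a \<in> D \<Longrightarrow> App t (App (Star t) a) \<in> D \<Longrightarrow>
        0 < \<delta> a \<Longrightarrow> \<delta> a < \<infinity> \<Longrightarrow> \<delta> (App t (App (Star t) a)) < \<delta> a"
  using diag[unfolded diagram_def, THEN conjunct2, THEN conjunct2, THEN conjunct2, THEN conjunct2, THEN conjunct2, THEN conjunct2, THEN conjunct2, THEN conjunct2, THEN conjunct2, THEN conjunct1] by blast
lemma c11: "App (Star t) a \<in> D \<Longrightarrow> a \<in> D \<Longrightarrow> App t (SSuc (App (Star t) a)) \<in> D \<Longrightarrow>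
        \<delta> (App (Star t) a) < \<infinity> \<Longrightarrow> \<delta> a \<le> \<delta> (App t (SSuc (App (Star t) a)))"
  using diag[unfolded diagram_def, THEN conjunct2, THEN conjunct2, THEN conjunct2, THEN conjunct2, THEN conjunct2, THEN conjunct2, THEN conjunct2, THEN conjunct2, THEN conjunct2, THEN conjunct2, THEN conjunct1] by blast
lemma c12: "Last (Star t) \<in> D \<Longrightarrow> Last t \<in> D \<Longrightarrow> \<delta> (Last (Star t)) = \<infinity> \<Longrightarrow> \<delta> (Last t) = \<infinity>"
  using diag[unfolded diagram_def, THEN conjunct2, THEN conjunct2, THEN conjunct2, THEN conjunct2, THEN conjunct2, THEN conjunct2, THEN conjunct2, THEN conjunct2, THEN conjunct2, THEN conjunct2, THEN conjunct2] by blast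

lemma inD_arg: "App t a \<in> D \<Longrightarrow> a \<in> D"
  using sat step.intros(1) by blast
lemma inD_applast: "App t a \<in> D \<Longrightarrow> App t (Last t) \<in> D"
  using sat step.intros(3) by blast
lemma inD_last: "App t a \<in> D \<Longrightarrow> Last t \<in> D"
  using inD_applast inD_arg by blast
lemma inD_comp: "App (Comp t u) a \<in> D \<Longrightarrow> App t (App u a) \<in> D"
  using sat step.intros(4) by blast
lemma inD_star1: "App (Star t) a \<in> D \<Longrightarrow> App t (App (Star t) a) \<in> D"
  using sat step.intros(5) by blast
lemma inD_star2: "App (Star t) a \<in> D \<Longrightarrow> App t (SSuc (App (Star t) a)) \<in> D"
  using sat step.intros(6) by blast
lemma inD_suc: "SSuc a \<in> D \<Longrightarrow> a \<in> D"
  using sat step.intros(2) by blast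

definition Av :: "nat \<Rightarrow> sample set" where
  "Av v = {a. App (Var v) a \<in> D}"

definition dv :: "nat \<Rightarrow> sample \<Rightarrow> enat" where
  "dv v a = \<delta> (App (Var v) a)"

definition Mv :: "nat \<Rightarrow> nat" where
  "Mv v = Max (insert 0 {n. \<exists>a\<in>Av v. \<delta> a = enat n})"

definition Qv :: "nat \<Rightarrow> enat" where
  "Qv v = Sup (dv v ` {a \<in> Av v. \<delta> a \<noteq> \<infinity>})"

definition Sv :: "nat \<Rightarrow> nat \<Rightarrow> enat set" where
  "Sv v n = dv v ` {a \<in> Av v. enat n \<le> \<delta> a}"

definition ev :: "nat \<Rightarrow> nat \<Rightarrow> enat" where
  "ev v n = (if n \<le> Mv v then \<infinity> else enat n + Qv v)"

definition fv0 :: "nat \<Rightarrow> nat \<Rightarrow> enat" where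
  "fv0 v n = (if n = 0 then 0 else Inf (insert (ev v n) (Sv v n)))"

definition fv :: "nat \<Rightarrow> enat \<Rightarrow> enat" where
  "fv v x = (case x of enat n \<Rightarrow> fv0 v n | \<infinity> \<Rightarrow> (SUP n. fv0 v n))"

lemma finite_Av: "finite (Av v)"
proof -
  have "Av v = App (Var v) -` D" unfolding Av_def by auto
  then show ?thesis using finD by (simp add: finite_vimageI inj_on_def)
qed

lemma finite_Mset: "finite {n. \<exists>a\<in>Av v. \<delta> a = enat n}"
proof -
  have "{n. \<exists>a\<in>Av v. \<delta> a = enat n} = enat -` (\<delta> ` Av v)" by (auto simp: image_iff) (metis)
  then show ?thesis using finite_Av by (simp add: finite_vimageI inj_on_def)
qed

lemma Av_D: "a \<in> Av v \<Longrightarrow> a \<in> D"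
  unfolding Av_def using inD_arg by blast

lemma mono_data: "a \<in> Av v \<Longrightarrow> b \<in> Av v \<Longrightarrow> \<delta> a \<le> \<delta> b \<Longrightarrow> dv v a \<le> dv v b"
proof -
  assume "a \<in> Av v" "b \<in> Av v" "\<delta> a \<le> \<delta> b"
  then show ?thesis unfolding dv_def Av_def using c1[of a b "Var v"] inD_arg by simp
qed

lemma zero_data: "a \<in> Av v \<Longrightarrow> \<delta> a = 0 \<Longrightarrow> dv v a = 0"
proof -
  assume "a \<in> Av v" "\<delta> a = 0"
  then show ?thesis unfolding dv_def Av_def using c2[of a "Var v"] inD_arg by simp
qed

lemma fin_le_M: "a \<in> Av v \<Longrightarrow> \<delta> a = enat n \<Longrightarrow> n \<le> Mv v"
  unfolding Mv_def using finite_Mset by (intro Max_ge) auto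

lemma M_data: "0 < Mv v \<Longrightarrow> \<exists>a\<in>Av v. \<delta> a = enat (Mv v)"
proof -
  assume p: "0 < Mv v"
  have "Mv v \<in> insert 0 {n. \<exists>a\<in>Av v. \<delta> a = enat n}" unfolding Mv_def
    using finite_Mset by (intro Max_in) auto
  then show ?thesis using p by auto
qed

lemma fin_le_Q: "a \<in> Av v \<Longrightarrow> \<delta> a \<noteq> \<infinity> \<Longrightarrow> dv v a \<le> Qv v"
  unfolding Qv_def by (auto intro: SUP_upper)

lemma fv0_zero: "fv0 v 0 = 0"
  unfolding fv0_def by simp

lemma fv0_mono: "m \<le> n \<Longrightarrow> fv0 v m \<le> fv0 v n"
proof (cases "m = 0")
  case True then show ?thesis by (simp add: fv0_def)
next
  case False
  assume mn: "m \<le> n"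
  then have n0: "n \<noteq> 0" using False by simp
  have "Inf (insert (ev v m) (Sv v m)) \<le> Inf (insert (ev v n) (Sv v n))"
  proof (rule Inf_mono)
    fix y assume "y \<in> insert (ev v n) (Sv v n)"
    then show "\<exists>x\<in>insert (ev v m) (Sv v m). x \<le> y"
    proof
      assume y: "y = ev v n"
      show ?thesis
      proof (cases "n \<le> Mv v")
        case True
        then have "ev v m \<le> y" using y by (simp add: ev_def)
        then show ?thesis by blast
      next
        case nM: False
        show ?thesis
        proof (cases "m \<le> Mv v")
          case False
          then have "ev v m \<le> y" using y nM mn by (simp add: ev_def add_right_mono)
          then show ?thesis by blast
        next
          case True
          then have "0 < Mv v" using False by simp
          then obtain a where a: "a \<in> Av v" "\<delta> a = enat (Mv v)" using M_data by blast
          then have "dv v a \<in> Sv v m" unfolding Sv_def using True by auto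
          moreover have "dv v a \<le> Qv v" using fin_le_Q a by simp
          moreover have "Qv v \<le> y" using y nM by (simp add: ev_def)
          ultimately show ?thesis by (meson insertCI order_trans)
        qed
      qed
    next
      assume "y \<in> Sv v n"
      then obtain b where b: "b \<in> Av v" "enat n \<le> \<delta> b" "y = dv v b" unfolding Sv_def by auto
      then have "enat m \<le> \<delta> b" using mn by (meson enat_ord_simps(1) order_trans)
      then have "y \<in> Sv v m" unfolding Sv_def using b by auto
      then show ?thesis by blast
    qed
  qed
  then show ?thesis using False n0 by (simp add: fv0_def del: Inf_insert)
qed

lemma fv_tw: "time_warp (fv v)"
proof (rule tw_intro)
  have "(0::enat) = enat 0" by (rule zero_enat_def)
  then have "fv v 0 = fv v (enat 0)" by (simp only:)
  also have "\<dots> = 0" by (simp add: fv_def fv0_zero)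
  finally show "fv v 0 = 0" .
next
  show "mono (fv v)"
  proof (rule monoI)
    fix x y :: enat assume "x \<le> y"
    then show "fv v x \<le> fv v y"
      by (cases x; cases y) (auto simp: fv_def fv0_mono intro: SUP_upper)
  qed
next
  show "fv v \<infinity> = (SUP n. fv v (enat n))" by (simp add: fv_def)
qed

lemma fv_data: "a \<in> Av v \<Longrightarrow> fv v (\<delta> a) = dv v a"
proof -
  assume a: "a \<in> Av v"
  show ?thesis
  proof (cases "\<delta> a")
    case (enat n)
    show ?thesis
    proof (cases "n = 0")
      case True
      then have "\<delta> a = 0" using enat by (simp add: enat_0)
      then have "dv v a = 0" using zero_data[OF a] by simp
      moreover have "fv v (\<delta> a) = fv0 v 0" using enat True by (simp add: fv_def)
      ultimately show ?thesis by (simp add: fv0_zero)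
    next
      case False
      have "Inf (insert (ev v n) (Sv v n)) = dv v a"
      proof (rule antisym)
        show "Inf (insert (ev v n) (Sv v n)) \<le> dv v a"
          using a enat by (intro Inf_lower) (auto simp: Sv_def)
        show "dv v a \<le> Inf (insert (ev v n) (Sv v n))"
        proof (rule Inf_greatest)
          fix y assume "y \<in> insert (ev v n) (Sv v n)"
          then show "dv v a \<le> y"
          proof
            assume "y = ev v n"
            then show ?thesis using fin_le_M[OF a enat] by (simp add: ev_def)
          next
            assume "y \<in> Sv v n"
            then obtain b where "b \<in> Av v" "enat n \<le> \<delta> b" "y = dv v b" unfolding Sv_def by auto
            then show ?thesis using mono_data[OF a] enat by simp
          qed
        qed
      qed
      then show ?thesis using enat False by (simp add: fv_def fv0_def del: Inf_insert)
    qed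
  next
    case infinity
    let ?q = "dv v a"
    have "(SUP n. fv0 v n) = ?q"
    proof (rule antisym)
      show "(SUP n. fv0 v n) \<le> ?q"
      proof (rule SUP_least)
        fix n
        show "fv0 v n \<le> ?q"
        proof (cases "n = 0")
          case True then show ?thesis by (simp add: fv0_def)
        next
          case False
          have "?q \<in> Sv v n" unfolding Sv_def using a infinity by auto
          then show ?thesis using False unfolding fv0_def by (auto intro: le_infI2 le_infI1 Inf_lower)
        qed
      qed
      show "?q \<le> (SUP n. fv0 v n)"
      proof (rule enat_le_by_fin)
        fix c assume c: "enat c \<le> ?q"
        let ?n = "Suc (Mv v + c)"
        have "enat c \<le> fv0 v ?n"
          unfolding fv0_def
        proof (subst if_not_P, simp, rule Inf_greatest)
          fix y assume "y \<in> insert (ev v ?n) (Sv v ?n)"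
          then show "enat c \<le> y"
          proof
            assume "y = ev v ?n"
            then have yy: "y = enat ?n + Qv v" by (simp add: ev_def)
            have "enat c \<le> enat ?n" by simp
            then show ?thesis unfolding yy by (rule add_increasing2[OF zero_le])
          next
            assume "y \<in> Sv v ?n"
            then obtain b where b: "b \<in> Av v" "enat ?n \<le> \<delta> b" "y = dv v b" unfolding Sv_def by auto
            have "\<delta> b = \<infinity>"
            proof (rule ccontr)
              assume "\<delta> b \<noteq> \<infinity>"
              then obtain k where "\<delta> b = enat k" by auto
              then show False using fin_le_M[OF b(1)] b(2) by fastforce
            qed
            then have "?q \<le> y" using mono_data[OF a b(1)] b(3) infinity by simp
            then show ?thesis using c by simp
          qed
        qed
        also have "\<dots> \<le> (SUP n. fv0 v n)" by (rule SUP_upper) simp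
        finally show "enat c \<le> (SUP n. fv0 v n)" .
      qed
    qed
    then show ?thesis using infinity by (simp add: fv_def)
  qed
qed

lemma fv_L:
  assumes a: "a \<in> Av v" and l: "\<delta> (Last (Var v)) = \<infinity>"
  shows "fv v (enat n) < fv v \<infinity>"
proof -
  let ?l = "Last (Var v)"
  have lA: "?l \<in> Av v" using a inD_applast unfolding Av_def by blast
  have lD: "?l \<in> D" using a inD_last unfolding Av_def by blast
  have dl: "dv v ?l = \<infinity>" using c5[OF lD] lA l unfolding Av_def dv_def by blast
  have inf: "fv v \<infinity> = \<infinity>" using fv_data[OF lA] l dl by simp
  have finv: "dv v b \<noteq> \<infinity>" if b: "b \<in> Av v" "\<delta> b \<noteq> \<infinity>" for b
  proof -
    have "(\<delta> ?l \<le> \<delta> b) = (\<delta> (App (Var v) ?l) = \<delta> (App (Var v) b))"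
      using c4[of "Var v" b] b(1) Av_D lD lA unfolding Av_def by blast
    then show ?thesis using l b(2) dl unfolding dv_def by auto
  qed
  have "\<infinity> \<notin> dv v ` {a \<in> Av v. \<delta> a \<noteq> \<infinity>}"
  proof
    assume "\<infinity> \<in> dv v ` {a \<in> Av v. \<delta> a \<noteq> \<infinity>}"
    then obtain b where "b \<in> Av v" "\<delta> b \<noteq> \<infinity>" "dv v b = \<infinity>" by (auto simp: image_iff)
    then show False using finv by blast
  qed
  then have Qf: "Qv v \<noteq> \<infinity>" unfolding Qv_def
    using finite_Av by (intro Sup_fin_enat) auto
  have "fv0 v n < \<infinity>"
  proof (cases "n = 0")
    case True then show ?thesis by (simp add: fv0_def)
  next
    case n0: False
    show ?thesis
    proof (cases "n \<le> Mv v")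
      case True
      then have "0 < Mv v" using n0 by simp
      then obtain b where b: "b \<in> Av v" "\<delta> b = enat (Mv v)" using M_data by blast
      then have "dv v b \<in> Sv v n" unfolding Sv_def using True by auto
      then have "fv0 v n \<le> dv v b" using n0 unfolding fv0_def by (auto intro: le_infI2 le_infI1 Inf_lower)
      moreover have "dv v b \<noteq> \<infinity>" using finv b by simp
      then have "dv v b < \<infinity>" by (cases "dv v b") simp_all
      ultimately show ?thesis by (rule le_less_trans)
    next
      case False
      then have "fv0 v n \<le> enat n + Qv v" using n0 unfolding fv0_def ev_def by (auto intro: le_infI2 le_infI1 Inf_lower)
      moreover have "enat n + Qv v \<noteq> \<infinity>" using Qf by (cases "Qv v") simp_all
      then have "enat n + Qv v < \<infinity>" by (cases "enat n + Qv v") simp_all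
      ultimately show ?thesis by (rule le_less_trans)
    qed
  qed
  then show ?thesis using inf by (simp add: fv_def)
qed

end

lemma tw_unb: "time_warp g \<Longrightarrow> (\<forall>n. g (enat n) < g \<infinity>) \<Longrightarrow> g \<infinity> = \<infinity>"
proof (rule ccontr)
  assume tw: "time_warp g" and a: "\<forall>n. g (enat n) < g \<infinity>" and "g \<infinity> \<noteq> \<infinity>"
  then obtain n where "g (enat n) = g \<infinity>" using tw_attained by blast
  then show False using a by (metis less_irrefl)
qed

lemma sstar_exact:
  assumes m: "mono f" and lo: "f (enat j) < \<alpha>" and up: "\<alpha> \<le> f (enat (Suc j))"
  shows "sstar f \<alpha> = enat j"
  unfolding sstar_def
proof (rule antisym)
  show "Sup {k. f k < \<alpha>} \<le> enat j"
  proof (rule Sup_least)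
    fix k assume "k \<in> {k. f k < \<alpha>}"
    then have k: "f k < \<alpha>" by simp
    show "k \<le> enat j"
    proof (rule ccontr)
      assume "\<not> k \<le> enat j"
      then have "enat (Suc j) \<le> k" by (cases k) auto
      then have "f (enat (Suc j)) \<le> f k" using m by (simp add: monoD)
      then show False using k up by simp
    qed
  qed
  show "enat j \<le> Sup {k. f k < \<alpha>}" using lo by (intro Sup_upper) simp
qed

lemma sstar_inf_in: "f \<infinity> < \<alpha> \<Longrightarrow> sstar f \<alpha> = \<infinity>"
proof -
  assume "f \<infinity> < \<alpha>"
  then have "\<infinity> \<le> sstar f \<alpha>" unfolding sstar_def by (intro Sup_upper) simp
  then show ?thesis by simp
qed

lemma sstar_zero: "sstar f 0 = 0"
  unfolding sstar_def by (simp add: bot_enat_def)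

lemma sstar_all: "(\<forall>n. f (enat n) < \<infinity>) \<Longrightarrow> sstar f \<infinity> = \<infinity>"
proof -
  assume a: "\<forall>n. f (enat n) < \<infinity>"
  have "\<infinity> \<le> sstar f \<infinity>"
  proof (rule enat_le_by_fin)
    fix c
    show "enat c \<le> sstar f \<infinity>" unfolding sstar_def using a by (intro Sup_upper) simp
  qed
  then show ?thesis by simp
qed

lemma sstar_L:
  assumes tw: "time_warp f" and a: "\<forall>n. f (enat n) < f \<infinity>"
  shows "\<forall>n. sstar f (enat n) < sstar f \<infinity>"
proof
  fix n
  have fi: "f \<infinity> = \<infinity>" using tw_unb[OF tw a] .
  have fin: "\<forall>n. f (enat n) < \<infinity>" using a fi by simp
  have si: "sstar f \<infinity> = \<infinity>" using sstar_all[OF fin] .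
  have "enat n < (SUP j. f (enat j))" using tw_inf[OF tw] fi by simp
  then obtain j where j: "enat n < f (enat j)" by (auto simp: less_SUP_iff)
  have "sstar f (enat n) \<le> enat j" unfolding sstar_def
  proof (rule Sup_least)
    fix k assume "k \<in> {k. f k < enat n}"
    then have k: "f k < enat n" by simp
    show "k \<le> enat j"
    proof (rule ccontr)
      assume "\<not> k \<le> enat j"
      then have "enat j \<le> k" by simp
      then have "f (enat j) \<le> f k" using tw_mono[OF tw] by (simp add: monoD)
      then show False using k j by simp
    qed
  qed
  moreover have "enat j < \<infinity>" by simp
  ultimately show "sstar f (enat n) < sstar f \<infinity>" using si by (metis le_less_trans)
qed

context hard
begin

lemma fv_tws: "\<forall>v. time_warp (fv v)"
  using fv_tw by blast

lemma main:
  "basic t \<Longrightarrow> (\<forall>a. App t a \<in> D \<longrightarrow> eval fv t (\<delta> a) = \<delta> (App t a)) \<and>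
     ((\<exists>a. App t a \<in> D) \<and> \<delta> (Last t) = \<infinity> \<longrightarrow> (\<forall>n. eval fv t (enat n) < eval fv t \<infinity>))"
proof (induction t)
  case (Var v)
  show ?case
  proof (intro conjI allI impI)
    fix a assume "App (Var v) a \<in> D"
    then have "a \<in> Av v" unfolding Av_def by simp
    then show "eval fv (Var v) (\<delta> a) = \<delta> (App (Var v) a)" using fv_data unfolding dv_def by simp
  next
    fix n assume h: "(\<exists>a. App (Var v) a \<in> D) \<and> \<delta> (Last (Var v)) = \<infinity>"
    then obtain a where "a \<in> Av v" unfolding Av_def by blast
    then show "eval fv (Var v) (enat n) < eval fv (Var v) \<infinity>" using fv_L h by simp
  qed
next
  case (Meet t1 t2) then show ?case by simp
next
  case (Join t1 t2) then show ?case by simp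
next
  case One
  show ?case
  proof (intro conjI allI impI)
    fix a assume "App One a \<in> D"
    then show "eval fv One (\<delta> a) = \<delta> (App One a)" using c6 inD_arg by simp
  next
    fix n show "eval fv One (enat n) < eval fv One \<infinity>" by simp
  qed
next
  case (Comp t u)
  then have bt: "basic t" and bu: "basic u" by auto
  note IHt = Comp.IH(1)[OF bt] and IHu = Comp.IH(2)[OF bu]
  have twt: "time_warp (eval fv t)" using tw_eval[OF fv_tws bt] .
  have twu: "time_warp (eval fv u)" using tw_eval[OF fv_tws bu] .
  show ?case
  proof (intro conjI allI impI)
    fix a assume a: "App (Comp t u) a \<in> D"
    have b1: "App t (App u a) \<in> D" using inD_comp[OF a] .
    have b2: "App u a \<in> D" using inD_arg[OF b1] .
    have "eval fv (Comp t u) (\<delta> a) = eval fv t (eval fv u (\<delta> a))" by simp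
    also have "\<dots> = eval fv t (\<delta> (App u a))" using IHu b2 by simp
    also have "\<dots> = \<delta> (App t (App u a))" using IHt b1 by simp
    also have "\<dots> = \<delta> (App (Comp t u) a)" using c8[OF a b1] by simp
    finally show "eval fv (Comp t u) (\<delta> a) = \<delta> (App (Comp t u) a)" .
  next
    fix n assume h: "(\<exists>a. App (Comp t u) a \<in> D) \<and> \<delta> (Last (Comp t u)) = \<infinity>"
    then obtain a where a: "App (Comp t u) a \<in> D" by blast
    have b1: "App t (App u a) \<in> D" using inD_comp[OF a] .
    have b2: "App u a \<in> D" using inD_arg[OF b1] .
    have "\<delta> (Last (Comp t u)) = \<infinity>" using h by simp
    then have "\<delta> (Last t) = \<infinity> \<and> \<delta> (Last u) = \<infinity>"
      by (rule c9[OF inD_last[OF a] inD_last[OF b1] inD_last[OF b2]])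
    then have Lt: "\<forall>n. eval fv t (enat n) < eval fv t \<infinity>" and Lu: "\<forall>n. eval fv u (enat n) < eval fv u \<infinity>"
      using IHt IHu b1 b2 by blast+
    have gi: "eval fv u \<infinity> = \<infinity>" using tw_unb[OF twu Lu] .
    then have "eval fv u (enat n) < \<infinity>" using Lu by metis
    then obtain j where j: "eval fv u (enat n) = enat j" by (cases "eval fv u (enat n)") auto
    have "eval fv t (enat j) < eval fv t \<infinity>" using Lt by blast
    then show "eval fv (Comp t u) (enat n) < eval fv (Comp t u) \<infinity>" using j gi by simp
  qed
next
  case (Star t)
  then have bt: "basic t" by simp
  note IH = Star.IH[OF bt]
  let ?f = "eval fv t"
  have twt: "time_warp ?f" using tw_eval[OF fv_tws bt] .
  have ev: "eval fv (Star t) = sstar ?f" using eval_star[OF fv_tws bt] .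
  show ?case
  proof (intro conjI allI impI)
    fix a assume s: "App (Star t) a \<in> D"
    let ?s = "App (Star t) a" and ?l = "Last (Star t)"
    let ?b1 = "App t ?s" and ?ss = "SSuc ?s"
    let ?b2 = "App t ?ss" and ?sl = "App (Star t) ?l"
    let ?b3 = "App t ?sl"
    have aD: "a \<in> D" using inD_arg[OF s] .
    have b1: "?b1 \<in> D" using inD_star1[OF s] .
    have b2: "?b2 \<in> D" using inD_star2[OF s] .
    have ssD: "?ss \<in> D" using inD_arg[OF b2] .
    have lD: "?l \<in> D" using inD_last[OF s] .
    have slD: "?sl \<in> D" using inD_applast[OF s] .
    have b3: "?b3 \<in> D" using inD_star1[OF slD] .
    have ltD: "Last t \<in> D" using inD_last[OF b1] .
    have fm: "?f (\<delta> ?s) = \<delta> ?b1" using IH b1 by blast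
    have fs: "?f (eSuc (\<delta> ?s)) = \<delta> ?b2" using IH b2 c3[OF s ssD] by metis
    have fsl: "?f (\<delta> ?sl) = \<delta> ?b3" using IH b3 by blast
    have c4i: "(\<delta> ?l \<le> \<delta> a) = (\<delta> ?sl = \<delta> ?s)" using c4[OF s aD lD slD] .
    have "sstar ?f (\<delta> a) = \<delta> ?s"
    proof (cases "\<delta> a = 0")
      case True
      then have "\<delta> ?s = 0" using c2[OF aD s] by simp
      then show ?thesis using True sstar_zero by simp
    next
      case a0: False
      then have apos: "0 < \<delta> a" by (simp add: zero_less_iff_neq_zero)
      show ?thesis
      proof (cases "\<delta> ?s = \<infinity>")
        case sinf: True
        show ?thesis
        proof (cases "\<delta> a = \<infinity>")
          case False
          then have "\<delta> a < \<infinity>" by (cases "\<delta> a") simp_all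
          then have "\<delta> ?b1 < \<delta> a" using c10[OF s aD b1 apos] by simp
          then have "?f \<infinity> < \<delta> a" using fm sinf by simp
          then show ?thesis using sstar_inf_in sinf by simp
        next
          case ainf: True
          then have slinf: "\<delta> ?sl = \<infinity>" using c4i sinf by simp
          show ?thesis
          proof (cases "\<delta> ?l = \<infinity>")
            case True
            then have "\<delta> (Last t) = \<infinity>" using c12[OF lD ltD] by simp
            then have "\<forall>n. ?f (enat n) < ?f \<infinity>" using IH b1 by blast
            then have "\<forall>n. ?f (enat n) < \<infinity>" by (metis enat_ord_code(3) not_less_iff_gr_or_eq order.strict_trans2)
            then show ?thesis using sstar_all ainf sinf by simp
          next
            case lfin: False
            show ?thesis
            proof (cases "\<delta> ?l = 0")
              case True
              then have "\<delta> ?sl = 0" using c2[OF lD slD] by simp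
              then show ?thesis using slinf by simp
            next
              case False
              then have "0 < \<delta> ?l" by (simp add: zero_less_iff_neq_zero)
              moreover have "\<delta> ?l < \<infinity>" using lfin by (cases "\<delta> ?l") simp_all
              ultimately have "\<delta> ?b3 < \<delta> ?l" using c10[OF slD lD b3] by simp
              then have "?f \<infinity> < \<infinity>" using fsl slinf \<open>\<delta> ?l < \<infinity>\<close> by (metis order.strict_trans)
              then show ?thesis using sstar_inf_in ainf sinf by simp
            qed
          qed
        qed
      next
        case sfin: False
        then obtain j where j: "\<delta> ?s = enat j" by (cases "\<delta> ?s") auto
        have up: "\<delta> a \<le> ?f (enat (Suc j))"
        proof -
          have "\<delta> ?s < \<infinity>" using j by simp
          then have "\<delta> a \<le> \<delta> ?b2" using c11[OF s aD b2] by simp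
          then show ?thesis using fs j by (simp add: eSuc_enat)
        qed
        have lo: "?f (enat j) < \<delta> a"
        proof (cases "\<delta> a = \<infinity>")
          case False
          then have "\<delta> a < \<infinity>" by (cases "\<delta> a") simp_all
          then have "\<delta> ?b1 < \<delta> a" using c10[OF s aD b1 apos] by simp
          then show ?thesis using fm j by simp
        next
          case ainf: True
          have "\<delta> ?b1 \<noteq> \<infinity>"
          proof
            assume b1inf: "\<delta> ?b1 = \<infinity>"
            have sls: "\<delta> ?sl = \<delta> ?s" using c4i ainf by simp
            show False
            proof (cases "\<delta> ?l = \<infinity>")
              case True
              then have "\<delta> ?sl = \<infinity>" using c5[OF lD slD] by simp
              then show False using sls sfin by simp
            next
              case lfin: False
              show False
              proof (cases "\<delta> ?l = 0")
                case True
                then have "\<delta> ?sl = 0" using c2[OF lD slD] by simp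
                then have "\<delta> ?s = 0" using sls by simp
                then have "\<delta> ?b1 = 0" using c2[OF inD_arg[OF b1] b1] by simp
                then show False using b1inf by simp
              next
                case False
                then have "0 < \<delta> ?l" by (simp add: zero_less_iff_neq_zero)
                moreover have "\<delta> ?l < \<infinity>" using lfin by (cases "\<delta> ?l") simp_all
                ultimately have "\<delta> ?b3 < \<delta> ?l" using c10[OF slD lD b3] by simp
                moreover have "\<delta> ?b1 \<le> \<delta> ?b3"
                  using c1[OF inD_arg[OF b1] slD b1 b3] sls by simp
                ultimately show False using b1inf \<open>\<delta> ?l < \<infinity>\<close> by simp
              qed
            qed
          qed
          then show ?thesis using fm j ainf by (cases "\<delta> ?b1") simp_all
        qed
        show ?thesis using sstar_exact[OF tw_mono[OF twt] lo up] j by simp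
      qed
    qed
    then show "eval fv (Star t) (\<delta> a) = \<delta> (App (Star t) a)" using ev by simp
  next
    fix n assume h: "(\<exists>a. App (Star t) a \<in> D) \<and> \<delta> (Last (Star t)) = \<infinity>"
    then obtain a where s: "App (Star t) a \<in> D" by blast
    have b1: "App t (App (Star t) a) \<in> D" using inD_star1[OF s] .
    have "\<delta> (Last (Star t)) = \<infinity>" using h by simp
    then have "\<delta> (Last t) = \<infinity>" by (rule c12[OF inD_last[OF s] inD_last[OF b1]])
    then have "\<forall>n. ?f (enat n) < ?f \<infinity>" using IH b1 by blast
    then show "eval fv (Star t) (enat n) < eval fv (Star t) \<infinity>" using sstar_L[OF twt] ev by simp
  qed
qed

end

lemma hard_dir:
  assumes ne: "ts \<noteq> []" and b: "\<forall>t\<in>set ts. basic t"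
    and dg: "diagram (saturation ((\<lambda>t. App t (TVar \<kappa>)) ` set ts)) \<delta>"
    and lt: "\<forall>t\<in>set ts. \<delta> (TVar \<kappa>) > \<delta> (App t (TVar \<kappa>))"
  shows "\<not> W_models_le One (joins ts)"
proof -
  let ?D0 = "(\<lambda>t. App t (TVar \<kappa>)) ` set ts"
  let ?D = "saturation ?D0"
  interpret hard ?D \<delta>
  proof
    show "finite ?D" by (rule finite_saturation) simp
    show "diagram ?D \<delta>" by (rule dg)
    show "\<And>a b. a \<in> ?D \<Longrightarrow> step a b \<Longrightarrow> b \<in> ?D" by (rule sat_step)
  qed
  let ?x = "\<delta> (TVar \<kappa>)"
  have "\<forall>t\<in>set ts. eval fv t ?x < ?x"
  proof
    fix t assume t: "t \<in> set ts"
    have "App t (TVar \<kappa>) \<in> ?D" using t by (intro sat_base) simp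
    then have "eval fv t ?x = \<delta> (App t (TVar \<kappa>))" using main b t by blast
    then show "eval fv t ?x < ?x" using lt t by simp
  qed
  then have "eval fv (joins ts) ?x < ?x" using joins_less[OF ne] by blast
  then show ?thesis unfolding W_models_le_def using fv_tws by (metis eval.simps(6) id_apply leD)
qed

theorem proposition3p10:
  fixes ts :: "trm list" and \<kappa> :: nat
  assumes "ts \<noteq> []" and "\<forall>t\<in>set ts. basic t"
  shows "(\<not> W_models_le One (joins ts)) \<longleftrightarrow>
    (\<exists>\<delta>. diagram (saturation ((\<lambda>t. App t (TVar \<kappa>)) ` set ts)) \<delta> \<and>
          (\<forall>t\<in>set ts. \<delta> (TVar \<kappa>) > \<delta> (App t (TVar \<kappa>))))"
proof
  assume "\<not> W_models_le One (joins ts)"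
  then show "\<exists>\<delta>. diagram (saturation ((\<lambda>t. App t (TVar \<kappa>)) ` set ts)) \<delta> \<and>
          (\<forall>t\<in>set ts. \<delta> (TVar \<kappa>) > \<delta> (App t (TVar \<kappa>)))"
    using easy_dir[OF assms(2)] by blast
next
  assume "\<exists>\<delta>. diagram (saturation ((\<lambda>t. App t (TVar \<kappa>)) ` set ts)) \<delta> \<and>
          (\<forall>t\<in>set ts. \<delta> (TVar \<kappa>) > \<delta> (App t (TVar \<kappa>)))"
  then obtain \<delta> where "diagram (saturation ((\<lambda>t. App t (TVar \<kappa>)) ` set ts)) \<delta>"
    "\<forall>t\<in>set ts. \<delta> (TVar \<kappa>) > \<delta> (App t (TVar \<kappa>))" by blast
  then show "\<not> W_models_le One (joins ts)" using hard_dir[OF assms] by blast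
qed

end
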